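(* Let $R$ be a commutative ring and let $(A,d)$ be an acyclic differential graded $R$-algebra. Let $\bar I\subseteq\bar J$ be graded ideals of the graded algebra $\ker(d)$. If $\bar I\neq\bar J$, then $A\cdot\bar I\neq A\cdot\bar J$.
   Context: A differential graded (dg) $R$-algebra $(A,d)$ is a $\mathbb{Z}$-graded $R$-algebra $A$ with an $R$-linear endomorphism $d$, homogeneous of degree $1$, with $d^2=0$ and $d(ab)=d(a)b+(-1)^{|a|}a\,d(b)$ for homogeneous $a,b$. It is acyclic if its homology vanishes, i.e. $\ker(d)=\operatorname{im}(d)$. The set $\ker(d)$ is a graded subalgebra of $A$; $A\cdot\bar I$ denotes the left ideal of $A$ generated by $\bar I$. *)

theory Defs
  imports Main
begin

text \<open>The algebra is the whole type 'a
(a unital associative ring), the scalar action of the commutative ring 'r is smult,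
and the grading is given by the family of additive subgroups G n (n :: int),
with 'a the internal direct sum of the G n.\<close>

definition is_direct_sum_grading :: "(int \<Rightarrow> 'a::ab_group_add set) \<Rightarrow> bool" where
  "is_direct_sum_grading G \<longleftrightarrow>
     (\<forall>n. 0 \<in> G n \<and> (\<forall>x\<in>G n. \<forall>y\<in>G n. x + y \<in> G n \<and> - x \<in> G n)) \<and>
     (\<forall>x. \<exists>!c :: int \<Rightarrow> 'a. finite {n. c n \<noteq> 0} \<and> (\<forall>n. c n \<in> G n) \<and>
            x = (\<Sum>n\<in>{n. c n \<noteq> 0}. c n))"

definition hcomp :: "(int \<Rightarrow> 'a::ab_group_add set) \<Rightarrow> int \<Rightarrow> 'a \<Rightarrow> 'a" where
  "hcomp G n x = (THE c :: int \<Rightarrow> 'a. finite {n. c n \<noteq> 0} \<and> (\<forall>n. c n \<in> G n) \<and>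
            x = (\<Sum>n\<in>{n. c n \<noteq> 0}. c n)) n"

definition is_algebra :: "('r::comm_ring_1 \<Rightarrow> 'a::{ring,monoid_mult} \<Rightarrow> 'a) \<Rightarrow> bool" where
  "is_algebra smult \<longleftrightarrow>
     (\<forall>r x y. smult r (x + y) = smult r x + smult r y) \<and>
     (\<forall>r s x. smult (r + s) x = smult r x + smult s x) \<and>
     (\<forall>r s x. smult (r * s) x = smult r (smult s x)) \<and>
     (\<forall>x. smult 1 x = x) \<and>
     (\<forall>r x y. smult r (x * y) = smult r x * y \<and> smult r (x * y) = x * smult r y)"

definition graded_algebra ::
    "('r::comm_ring_1 \<Rightarrow> 'a::{ring,monoid_mult} \<Rightarrow> 'a) \<Rightarrow> (int \<Rightarrow> 'a set) \<Rightarrow> bool" where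
  "graded_algebra smult G \<longleftrightarrow>
     is_algebra smult \<and> is_direct_sum_grading G \<and>
     (\<forall>n r x. x \<in> G n \<longrightarrow> smult r x \<in> G n) \<and>
     (\<forall>m n x y. x \<in> G m \<longrightarrow> y \<in> G n \<longrightarrow> x * y \<in> G (m + n)) \<and>
     1 \<in> G 0"

definition dg_algebra ::
    "('r::comm_ring_1 \<Rightarrow> 'a::{ring,monoid_mult} \<Rightarrow> 'a) \<Rightarrow> (int \<Rightarrow> 'a set) \<Rightarrow> ('a \<Rightarrow> 'a) \<Rightarrow> bool" where
  "dg_algebra smult G d \<longleftrightarrow>
     graded_algebra smult G \<and>
     (\<forall>x y. d (x + y) = d x + d y) \<and>
     (\<forall>r x. d (smult r x) = smult r (d x)) \<and>
     (\<forall>n x. x \<in> G n \<longrightarrow> d x \<in> G (n + 1)) \<and>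
     (\<forall>x. d (d x) = 0) \<and>
     (\<forall>m n a b. a \<in> G m \<longrightarrow> b \<in> G n \<longrightarrow>
        d (a * b) = d a * b + (-1) ^ nat \<bar>m\<bar> * a * d b)"

definition acyclic :: "('a::ring \<Rightarrow> 'a) \<Rightarrow> bool" where
  "acyclic d \<longleftrightarrow> {x. d x = 0} = range d"

definition ideal_of :: "'a::{ring,monoid_mult} set \<Rightarrow> 'a set \<Rightarrow> bool" where
  "ideal_of S I \<longleftrightarrow> I \<subseteq> S \<and> 0 \<in> I \<and>
     (\<forall>x\<in>I. \<forall>y\<in>I. x + y \<in> I \<and> - x \<in> I) \<and>
     (\<forall>s\<in>S. \<forall>x\<in>I. s * x \<in> I \<and> x * s \<in> I)"

definition graded_ideal_of_ker ::
    "(int \<Rightarrow> 'a::{ring,monoid_mult} set) \<Rightarrow> ('a \<Rightarrow> 'a) \<Rightarrow> 'a set \<Rightarrow> bool" where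
  "graded_ideal_of_ker G d I \<longleftrightarrow>
     ideal_of {x. d x = 0} I \<and> (\<forall>x\<in>I. \<forall>n. hcomp G n x \<in> I)"

definition left_ideal_gen :: "'a::{ring,monoid_mult} set \<Rightarrow> 'a set" where
  "left_ideal_gen I = {x. \<exists>ps :: ('a \<times> 'a) list. set (map snd ps) \<subseteq> I \<and>
                         x = sum_list (map (\<lambda>(a, i). a * i) ps)}"

end

theory Submission
  imports Defs
begin

lemma decomp:
  assumes "is_direct_sum_grading G"
  shows "finite {n. hcomp G n x \<noteq> 0} \<and> (\<forall>n. hcomp G n x \<in> G n) \<and>
         x = (\<Sum>n\<in>{n. hcomp G n x \<noteq> 0}. hcomp G n x)"
proof -
  let ?P = "\<lambda>c :: int \<Rightarrow> _. finite {n. c n \<noteq> 0} \<and> (\<forall>n. c n \<in> G n) \<and>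
            x = (\<Sum>n\<in>{n. c n \<noteq> 0}. c n)"
  have "\<exists>!c. ?P c" using assms unfolding is_direct_sum_grading_def by blast
  hence "?P (THE c. ?P c)" by (rule theI')
  moreover have "\<And>n. hcomp G n x = (THE c. ?P c) n" unfolding hcomp_def by simp
  ultimately show ?thesis by simp
qed

lemma d_sum:
  fixes d :: "'a::ab_group_add \<Rightarrow> 'b::ab_group_add"
  assumes add: "\<And>x y. d (x + y) = d x + d y" and fin: "finite S"
  shows "d (sum f S) = (\<Sum>n\<in>S. d (f n))"
  using fin
proof (induction S rule: finite_induct)
  case empty
  have "d 0 = d 0 + d 0" using add[of 0 0] by simp
  hence "d 0 = 0" by (metis add_cancel_left_right)
  thus ?case by simp
next
  case (insert x F)
  then show ?case by (simp add: add)
qed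

lemma d_mult_ker:
  assumes dg: "dg_algebra smult G d"
    and ker: "\<And>n. d (hcomp G n i) = 0"
  shows "d (y * i) = d y * i"
proof -
  have gr: "is_direct_sum_grading G" using dg unfolding dg_algebra_def graded_algebra_def by blast
  have add: "\<And>x y. d (x + y) = d x + d y" using dg unfolding dg_algebra_def by blast
  have leib: "\<And>m n a b. a \<in> G m \<Longrightarrow> b \<in> G n \<Longrightarrow>
        d (a * b) = d a * b + (-1) ^ nat \<bar>m\<bar> * a * d b"
    using dg unfolding dg_algebra_def by blast
  define S where "S = {n. hcomp G n y \<noteq> 0}"
  define T where "T = {n. hcomp G n i \<noteq> 0}"
  have y: "finite S" "\<And>n. hcomp G n y \<in> G n" "y = (\<Sum>n\<in>S. hcomp G n y)"
    using decomp[OF gr, of y] unfolding S_def by auto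
  have i: "finite T" "\<And>n. hcomp G n i \<in> G n" "i = (\<Sum>n\<in>T. hcomp G n i)"
    using decomp[OF gr, of i] unfolding T_def by auto
  have "y * i = (\<Sum>m\<in>S. \<Sum>n\<in>T. hcomp G m y * hcomp G n i)"
    by (subst y(3), subst i(3), rule sum_product)
  hence "d (y * i) = (\<Sum>m\<in>S. \<Sum>n\<in>T. d (hcomp G m y * hcomp G n i))"
    using d_sum[OF add y(1), of "\<lambda>m. \<Sum>n\<in>T. hcomp G m y * hcomp G n i"]
      d_sum[OF add i(1)] by simp
  also have "\<dots> = (\<Sum>m\<in>S. \<Sum>n\<in>T. d (hcomp G m y) * hcomp G n i)"
    using leib[OF y(2) i(2)] ker by simp
  also have "\<dots> = (\<Sum>m\<in>S. d (hcomp G m y)) * (\<Sum>n\<in>T. hcomp G n i)"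
    by (rule sum_product[symmetric])
  also have "\<dots> = d y * i"
    using d_sum[OF add y(1), of "\<lambda>m. hcomp G m y"] y(3)[symmetric] i(3)[symmetric] by simp
  finally show ?thesis .
qed

theorem lemma2p6:
  fixes smult :: "'r::comm_ring_1 \<Rightarrow> 'a::{ring,monoid_mult} \<Rightarrow> 'a"
    and G :: "int \<Rightarrow> 'a set"
    and d :: "'a \<Rightarrow> 'a"
    and I J :: "'a set"
  assumes "dg_algebra smult G d"
    and "acyclic d"
    and "graded_ideal_of_ker G d I"
    and "graded_ideal_of_ker G d J"
    and "I \<subseteq> J"
    and "I \<noteq> J"
  shows "left_ideal_gen I \<noteq> left_ideal_gen J"
proof
  assume eq: "left_ideal_gen I = left_ideal_gen J"
  have dg: "dg_algebra smult G d" by fact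
  have add: "\<And>x y. d (x + y) = d x + d y" using dg unfolding dg_algebra_def by blast
  have dd: "\<And>x. d (d x) = 0" using dg unfolding dg_algebra_def by blast
  have leib: "\<And>m n a b. a \<in> G m \<Longrightarrow> b \<in> G n \<Longrightarrow>
        d (a * b) = d a * b + (-1) ^ nat \<bar>m\<bar> * a * d b"
    using dg unfolding dg_algebra_def by blast
  have one: "1 \<in> G 0" using dg unfolding dg_algebra_def graded_algebra_def by blast
  have d0: "d 0 = 0" using add[of 0 0] by (metis add_cancel_left_right)
  have "d 1 = d 1 + d 1" using leib[OF one one] by simp
  hence d1: "d 1 = 0" by simp
  obtain h where h: "d h = 1" using assms(2) d1 unfolding acyclic_def
    by (metis (mono_tags, lifting) dd d1 mem_Collect_eq rangeE)
  have Iid: "ideal_of {x. d x = 0} I" and Ig: "\<forall>x\<in>I. \<forall>n. hcomp G n x \<in> I"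
    using assms(3) unfolding graded_ideal_of_ker_def by auto
  have Jid: "ideal_of {x. d x = 0} J" and Jg: "\<forall>x\<in>J. \<forall>n. hcomp G n x \<in> J"
    using assms(4) unfolding graded_ideal_of_ker_def by auto
  have Iker: "\<And>x. x \<in> I \<Longrightarrow> d x = 0" using Iid unfolding ideal_of_def by blast
  have Jker: "\<And>x. x \<in> J \<Longrightarrow> d x = 0" using Jid unfolding ideal_of_def by blast
  have I0: "0 \<in> I" and Iadd: "\<And>x y. x \<in> I \<Longrightarrow> y \<in> I \<Longrightarrow> x + y \<in> I"
    and Imul: "\<And>s x. d s = 0 \<Longrightarrow> x \<in> I \<Longrightarrow> s * x \<in> I"
    using Iid unfolding ideal_of_def by auto
  obtain j where j: "j \<in> J" "j \<notin> I" using assms(5,6) by blast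
  have "j \<in> left_ideal_gen J" unfolding left_ideal_gen_def
    by (rule CollectI, rule exI[of _ "[(1, j)]"]) (use j in simp)
  hence "j \<in> left_ideal_gen I" using eq by simp
  hence "\<exists>ps :: ('a \<times> 'a) list. set (map snd ps) \<subseteq> I \<and> j = sum_list (map (\<lambda>(a, i). a * i) ps)"
    unfolding left_ideal_gen_def by (rule CollectD)
  then obtain ps where ps: "set (map snd ps) \<subseteq> I" "j = sum_list (map (\<lambda>(a, i). a * i) ps)"
    by (elim exE conjE)
  have key: "\<And>y. set (map snd ps) \<subseteq> I \<Longrightarrow> d (y * sum_list (map (\<lambda>(a, i). a * i) ps)) \<in> I"
  proof (induction ps)
    case Nil
    then show ?case using d0 I0 by simp
  next
    case (Cons p ps)
    obtain a i where p: "p = (a, i)" by fastforce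
    have iI: "i \<in> I" using Cons.prems p by simp
    have "y * sum_list (map (\<lambda>(a, i). a * i) (p # ps)) = (y * a) * i + y * sum_list (map (\<lambda>(a, i). a * i) ps)"
      by (simp add: p distrib_left mult.assoc)
    hence "d (y * sum_list (map (\<lambda>(a, i). a * i) (p # ps))) = d (y * a) * i + d (y * sum_list (map (\<lambda>(a, i). a * i) ps))"
      using add d_mult_ker[OF dg, of i "y * a"] Iker Ig iI by simp
    moreover have "d (y * a) * i \<in> I" using Imul dd iI by blast
    ultimately show ?case using Cons Iadd by simp
  qed
  have "j = d h * j" using h by simp
  also have "\<dots> = d (h * j)" using d_mult_ker[OF dg, of j h] Jker Jg j(1) by simp
  finally have "j \<in> I" using key[OF ps(1), of h] ps(2) by simp
  with j show False by simp
qed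

end
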